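(* Let $b,c\in Z^{10}$ with $\sum_i b_i=\sum_i c_i=0$. Let $j\in\{1,3,5,7,9\}$ and let $i_1,i_2,i_3,i_4$ be the remaining four odd indices listed in cyclic order. Assume $t\mid B_j$, $t\mid C_j$, and $t\nmid B_{i_l}$, $t\nmid C_{i_l}$ for $l=1,2,3,4$. Assume moreover $t\nmid B_{i_1}+B_{i_2}$, $t\mid B_{i_2}+B_{i_3}$, $t\nmid C_{i_1}+C_{i_2}$ and $t\mid C_{i_2}+C_{i_3}$. Then $\mathbb{M}(b)$ and $\mathbb{M}(c)$ are isomorphic $B_{5,10}$-modules.
   Context: Let $Z=\mathbb{C}[[t]]$. Let $\Gamma_{10}$ be the quiver with vertices $0,1,\dots,9$ (indices taken mod $10$) on a cycle and arrows $x_i\colon i-1\to i$, $y_i\colon i\to i-1$ for $i=1,\dots,10$. Let $B_{5,10}$ be the completed path algebra of $\Gamma_{10}$ modulo the closed ideal generated by $xy=yx$ and $x^5=y^5$ at every vertex. For $b=(b_1,\dots,b_{10})\in Z^{10}$ with $\sum_i b_i=0$, the $B_{5,10}$-module $\mathbb{M}(b)$ has $V_i=Z\oplus Z$ at every vertex, and for odd $j$: $x_j=\begin{pmatrix} t& b_j\\ 0&1\end{pmatrix}$, $y_j=\begin{pmatrix} 1&-b_j\\0&t\end{pmatrix}$; for even $j$: $x_j=\begin{pmatrix}1&b_j\\0&t\end{pmatrix}$, $y_j=\begin{pmatrix}t&-b_j\\0&1\end{pmatrix}$. An isomorphism $\mathbb{M}(b)\to\mathbb{M}(c)$ is a family of invertible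 $Z$-linear maps $\varphi_i\colon Z^2\to Z^2$ commuting with all $x_i$ and $y_i$. For odd $i$ write $B_i=b_i+b_{i+1}$ and $C_i=c_i+c_{i+1}$ (indices mod $10$). *)

theory Defs
  imports "HOL-Analysis.Analysis" "HOL-Computational_Algebra.Formal_Power_Series"
begin

text \<open>Z = C[[t]] is the type complex fps; t is fps_X.
  Z-linear maps Z^2 -> Z^2 are 2x2 matrices over Z acting on column vectors.\<close>

type_synonym zmat = "complex fps ^ 2 ^ 2"

definition mat2 :: "complex fps \<Rightarrow> complex fps \<Rightarrow> complex fps \<Rightarrow> complex fps \<Rightarrow> zmat" where
  "mat2 a b c d = (\<chi> i j. if i = 1 then (if j = 1 then a else b) else (if j = 1 then c else d))"

text \<open>The arrow x_j : V_(j-1) -> V_j of M(b), for j = 1..10 (b indexed by 1..10).\<close>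
definition xmap :: "(nat \<Rightarrow> complex fps) \<Rightarrow> nat \<Rightarrow> zmat" where
  "xmap b j = (if odd j then mat2 fps_X (b j) 0 1 else mat2 1 (b j) 0 fps_X)"

text \<open>The arrow y_j : V_j -> V_(j-1) of M(b).\<close>
definition ymap :: "(nat \<Rightarrow> complex fps) \<Rightarrow> nat \<Rightarrow> zmat" where
  "ymap b j = (if odd j then mat2 1 (- b j) 0 fps_X else mat2 fps_X (- b j) 0 1)"

definition M_iso :: "(nat \<Rightarrow> complex fps) \<Rightarrow> (nat \<Rightarrow> complex fps) \<Rightarrow> bool" where
  "M_iso b c \<longleftrightarrow> (\<exists>\<phi> :: nat \<Rightarrow> zmat.
     (\<forall>i<10. invertible (\<phi> i)) \<and>
     (\<forall>j\<in>{1..10}. \<phi> (j mod 10) ** xmap b j = xmap c j ** \<phi> (j - 1) \<and>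
                   \<phi> (j - 1) ** ymap b j = ymap c j ** \<phi> (j mod 10)))"

definition Bsum :: "(nat \<Rightarrow> complex fps) \<Rightarrow> nat \<Rightarrow> complex fps" where
  "Bsum b i = b i + b (i mod 10 + 1)"

text \<open>The l-th odd index after j in cyclic order (1..10 range).\<close>
definition cyc :: "nat \<Rightarrow> nat \<Rightarrow> nat" where
  "cyc j l = (j + 2 * l - 1) mod 10 + 1"

end

theory Submission imports Defs begin

lemma X_dvd_iff: "fps_X dvd (f::complex fps) \<longleftrightarrow> fps_nth f 0 = 0"
proof
  assume "fps_X dvd f" then obtain g where "f = fps_X * g" by (auto elim: dvdE)
  then show "fps_nth f 0 = 0" by simp
next
  assume h: "fps_nth f 0 = 0"
  have "f = fps_X * fps_shift 1 f"
    by (rule fps_ext) (simp add: fps_X_mult_nth h)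
  then show "fps_X dvd f" by (metis dvd_triv_left)
qed

lemma mat2_mult: "mat2 a b c d ** mat2 a' b' c' d' =
   mat2 (a*a' + b*c') (a*b' + b*d') (c*a' + d*c') (c*b' + d*d')"
  unfolding mat2_def matrix_matrix_mult_def
  by (simp add: vec_eq_iff forall_2 sum_2)

lemma mat2_eq: "mat2 a b c d = mat2 a' b' c' d' \<longleftrightarrow> a = a' \<and> b = b' \<and> c = c' \<and> d = d'"
  unfolding mat2_def by (auto simp: vec_eq_iff forall_2)

lemma mat1: "mat 1 = mat2 1 0 0 1"
  unfolding mat2_def mat_def by (simp add: vec_eq_iff forall_2)

lemma inv_core:
  fixes a b c d q :: "'a::comm_ring_1"
  assumes "(a*d - b*c) * q = 1"
  shows "a * (q * d) + b * (- (q * c)) = 1" "q * d * a + - (q * b) * c = 1"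
    "c * - (q * b) + d * (q * a) = 1" "- (q * c) * b + q * a * d = 1"
    "a * - (q * b) + b * (q * a) = 0" "c * (q * d) + d * - (q * c) = 0"
    "q * d * b + - (q * b) * d = 0" "- (q * c) * a + q * a * c = 0"
  using assms by (simp_all add: algebra_simps)

lemma inv2: assumes "a*d - b*c = fps_const k" "k \<noteq> 0"
  shows "invertible (mat2 a b c d)"
  unfolding invertible_def
proof (intro exI conjI)
  define q where "q = fps_const (1/k)"
  have kk: "(a*d - b*c) * q = 1" using assms unfolding q_def by (simp flip: fps_const_mult)
  note I = inv_core[OF kk]
  show "mat2 a b c d ** mat2 (q*d) (- (q*b)) (- (q*c)) (q*a) = mat 1"
    unfolding mat2_mult mat1 mat2_eq using I by simp
  show "mat2 (q*d) (- (q*b)) (- (q*c)) (q*a) ** mat2 a b c d  = mat 1"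
    unfolding mat2_mult mat1 mat2_eq using I by simp
qed

lemma odd_x:
  fixes X p sv r sg ta bt gm w :: "complex fps"
  assumes h: "X * w = sg * sv - ta*p - sg*ta*r"
  shows "mat2 (p+(sg+gm)*r) ((sg+gm) * sv-(ta+bt)*p-(sg+gm)*(ta+bt)*r) r (sv-(ta+bt)*r) ** mat2 X bt 0 1 = mat2 X gm 0 1 ** mat2 (p+sg*r) w (X*r) (sv-ta*r)"
  unfolding mat2_mult mat2_eq mult.commute[of w X] h by (simp add: algebra_simps)

lemma odd_y:
  fixes X p sv r sg ta bt gm w :: "complex fps"
  assumes h: "X * w = sg * sv - ta*p - sg*ta*r"
  shows "mat2 (p+sg*r) w (X*r) (sv-ta*r) ** mat2 1 (-bt) 0 X = mat2 1 (-gm) 0 X ** mat2 (p+(sg+gm)*r) ((sg+gm) * sv-(ta+bt)*p-(sg+gm)*(ta+bt)*r) r (sv-(ta+bt)*r)"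
  unfolding mat2_mult mat2_eq mult.commute[of w X] h by (simp add: algebra_simps)

lemma even_x:
  fixes X p sv r sg ta bt gm w :: "complex fps"
  assumes h: "X * w = (sg+gm) * sv-(ta+bt)*p-(sg+gm)*(ta+bt)*r"
  shows "mat2 (p+(sg+gm)*r) w (X*r) (sv-(ta+bt)*r) ** mat2 1 bt 0 X = mat2 1 gm 0 X ** mat2 (p+sg*r) (sg * sv - ta*p - sg*ta*r) r (sv-ta*r)"
  unfolding mat2_mult mat2_eq mult.commute[of w X] h by (simp add: algebra_simps)

lemma even_y:
  fixes X p sv r sg ta bt gm w :: "complex fps"
  assumes h: "X * w = (sg+gm) * sv-(ta+bt)*p-(sg+gm)*(ta+bt)*r"
  shows "mat2 (p+sg*r) (sg * sv - ta*p - sg*ta*r) r (sv-ta*r) ** mat2 X (-bt) 0 1 = mat2 X (-gm) 0 1 ** mat2 (p+(sg+gm)*r) w (X*r) (sv-(ta+bt)*r)"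
  unfolding mat2_mult mat2_eq mult.commute[of w X] h by (simp add: algebra_simps)


lemma shiftX: "fps_nth f 0 = 0 \<Longrightarrow> fps_X * fps_shift 1 f = (f::complex fps)"
  by (rule fps_ext) (simp add: fps_X_mult_nth)

definition Ev :: "(nat \<Rightarrow> complex fps) \<Rightarrow> (nat \<Rightarrow> complex fps) \<Rightarrow> complex \<Rightarrow> complex \<Rightarrow> complex \<Rightarrow> nat \<Rightarrow> complex fps" where
  "Ev b c p sv r i = sum c {1..i} * fps_const sv - sum b {1..i} * fps_const p
      - sum c {1..i} * sum b {1..i} * fps_const r"

definition phi :: "(nat \<Rightarrow> complex fps) \<Rightarrow> (nat \<Rightarrow> complex fps) \<Rightarrow> complex \<Rightarrow> complex \<Rightarrow> complex \<Rightarrow> nat \<Rightarrow> zmat" where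
  "phi b c p sv r i = (if even i then
      mat2 (fps_const p + sum c {1..i} * fps_const r) (fps_shift 1 (Ev b c p sv r i))
           (fps_X * fps_const r) (fps_const sv - sum b {1..i} * fps_const r)
    else mat2 (fps_const p + sum c {1..i} * fps_const r) (Ev b c p sv r i)
           (fps_const r) (fps_const sv - sum b {1..i} * fps_const r))"

lemma det_core1:
  fixes P S R sg ta w X :: "'a::comm_ring_1"
  assumes h: "X*w = sg*S - ta*P - sg*ta*R"
  shows "(P + sg*R)*(S - ta*R) - w*(X*R) = P*S"
proof -
  have "w*(X*R) = (X*w)*R" by (simp add: ac_simps)
  then show ?thesis unfolding h by (simp add: algebra_simps)
qed

lemma det_core2:
  fixes P S R sg ta :: "'a::comm_ring_1"
  shows "(P + sg*R)*(S - ta*R) - (sg*S - ta*P - sg*ta*R)*R = P*S"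
  by (simp add: algebra_simps)

lemma crit:
  fixes b c :: "nat \<Rightarrow> complex fps" and p sv r :: complex
  assumes sb: "(\<Sum>i=1..10. b i) = 0" and sc: "(\<Sum>i=1..10. c i) = 0"
    and p0: "p \<noteq> 0" and s0: "sv \<noteq> 0"
    and dv: "\<And>i. i \<in> {2,4,6,8} \<Longrightarrow> fps_nth (Ev b c p sv r i) 0 = 0"
  shows "M_iso b c"
proof -
  let ?E = "Ev b c p sv r" and ?phi = "phi b c p sv r"
  have E0: "?E 0 = 0" by (simp add: Ev_def)
  have E10: "?E 10 = 0" using sb sc by (simp add: Ev_def)
  have XE: "fps_X * fps_shift 1 (?E i) = ?E i" if "even i" "i \<le> 10" for i
  proof -
    have "i \<in> {0,2,4,6,8,10}" using that by (auto simp: even_iff_mod_2_eq_zero)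
    then have "fps_nth (?E i) 0 = 0" using dv E0 E10 by auto
    then show ?thesis by (rule shiftX)
  qed
  have phi10: "?phi 10 = ?phi 0" using sb sc by (simp add: phi_def Ev_def)
  show ?thesis unfolding M_iso_def
  proof (intro exI conjI ballI allI impI)
    fix i :: nat assume "i < 10"
    show "invertible (?phi i)"
    proof (cases "even i")
      case True
      have XEi: "fps_X * fps_shift 1 (?E i) = ?E i" using XE True \<open>i<10\<close> by simp
      have d: "(fps_const p + sum c {1..i} * fps_const r) * (fps_const sv - sum b {1..i} * fps_const r)
          - fps_shift 1 (?E i) * (fps_X * fps_const r) = fps_const (p * sv)"
        using det_core1[of fps_X "fps_shift 1 (?E i)" "sum c {1..i}" "fps_const sv" "sum b {1..i}" "fps_const p" "fps_const r"]
          XEi unfolding Ev_def by (simp add: fps_const_mult)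
      show ?thesis using True unfolding phi_def
        using inv2[OF d] p0 s0 by simp
    next
      case False
      have d: "(fps_const p + sum c {1..i} * fps_const r) * (fps_const sv - sum b {1..i} * fps_const r)
          - ?E i * fps_const r = fps_const (p * sv)"
        using det_core2[of "fps_const p" "sum c {1..i}" "fps_const r" "fps_const sv" "sum b {1..i}"]
        unfolding Ev_def by (simp add: fps_const_mult)
      show ?thesis using False unfolding phi_def
        using inv2[OF d] p0 s0 by simp
    qed
  next
    fix j :: nat assume j: "j \<in> {1..10}"
    then obtain k where k: "j = Suc k" "k < 10" by (cases j) auto
    have sumc: "sum c {1..j} = sum c {1..k} + c j" and sumb: "sum b {1..j} = sum b {1..k} + b j"
      using k by simp_all
    have "?phi (j mod 10) ** xmap b j = xmap c j ** ?phi (j - 1) \<and>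
          ?phi (j - 1) ** ymap b j = ymap c j ** ?phi (j mod 10)"
    proof (cases "even j")
      case False
      then have ek: "even k" using k by simp
      have jm: "j mod 10 = j" using k False by (auto simp: mod_if)
      have h: "fps_X * fps_shift 1 (?E k) = sum c {1..k} * fps_const sv - sum b {1..k} * fps_const p
         - sum c {1..k} * sum b {1..k} * fps_const r" using XE[OF ek] k by (simp add: Ev_def)
      have pj: "?phi j = mat2 (fps_const p + (sum c {1..k} + c j) * fps_const r)
          ((sum c {1..k} + c j) * fps_const sv - (sum b {1..k} + b j) * fps_const p
           - (sum c {1..k} + c j) * (sum b {1..k} + b j) * fps_const r)
          (fps_const r) (fps_const sv - (sum b {1..k} + b j) * fps_const r)"
        using False unfolding phi_def Ev_def sumc sumb by simp
      have pk: "?phi (j - 1) = mat2 (fps_const p + sum c {1..k} * fps_const r) (fps_shift 1 (?E k))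
           (fps_X * fps_const r) (fps_const sv - sum b {1..k} * fps_const r)"
        using ek k unfolding phi_def by simp
      have xb: "xmap b j = mat2 fps_X (b j) 0 1" "xmap c j = mat2 fps_X (c j) 0 1"
        "ymap b j = mat2 1 (- b j) 0 fps_X" "ymap c j = mat2 1 (- c j) 0 fps_X"
        using False by (simp_all add: xmap_def ymap_def)
      show ?thesis unfolding jm pj pk xb
        using odd_x[OF h] odd_y[OF h] by blast
    next
      case True
      then have ok: "odd k" using k by simp
      have jm: "?phi (j mod 10) = ?phi j" using k True phi10 by (cases "j = 10") auto
      have h: "fps_X * fps_shift 1 (?E j) = (sum c {1..k} + c j) * fps_const sv - (sum b {1..k} + b j) * fps_const p
         - (sum c {1..k} + c j) * (sum b {1..k} + b j) * fps_const r" using XE[OF True] k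
        by (simp add: Ev_def sumc sumb)
      have pj: "?phi j = mat2 (fps_const p + (sum c {1..k} + c j) * fps_const r) (fps_shift 1 (?E j))
           (fps_X * fps_const r) (fps_const sv - (sum b {1..k} + b j) * fps_const r)"
        using True unfolding phi_def sumc sumb by simp
      have pk: "?phi (j - 1) = mat2 (fps_const p + sum c {1..k} * fps_const r)
          (sum c {1..k} * fps_const sv - sum b {1..k} * fps_const p - sum c {1..k} * sum b {1..k} * fps_const r)
          (fps_const r) (fps_const sv - sum b {1..k} * fps_const r)"
        using ok k unfolding phi_def Ev_def by simp
      have xb: "xmap b j = mat2 1 (b j) 0 fps_X" "xmap c j = mat2 1 (c j) 0 fps_X"
        "ymap b j = mat2 fps_X (- b j) 0 1" "ymap c j = mat2 fps_X (- c j) 0 1"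
        using True by (simp_all add: xmap_def ymap_def)
      show ?thesis unfolding jm pj pk xb
        using even_x[OF h] even_y[OF h] by blast
    qed
    then show "?phi (j mod 10) ** xmap b j = xmap c j ** ?phi (j - 1)"
      "?phi (j - 1) ** ymap b j = ymap c j ** ?phi (j mod 10)" by auto
  qed
qed

lemma s2: "sum f {1..2::nat} = f 1 + (f 2 :: 'a::comm_monoid_add)"
  by (simp add: eval_nat_numeral ac_simps)
lemma s4: "sum f {1..4::nat} = f 1 + f 2 + f 3 + (f 4 :: 'a::comm_monoid_add)"
  by (simp add: eval_nat_numeral ac_simps)
lemma s6: "sum f {1..6::nat} = f 1 + f 2 + f 3 + f 4 + f 5 + (f 6 :: 'a::comm_monoid_add)"
  by (simp add: eval_nat_numeral ac_simps)
lemma s8: "sum f {1..8::nat} = f 1 + f 2 + f 3 + f 4 + f 5 + f 6 + f 7 + (f 8 :: 'a::comm_monoid_add)"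
  by (simp add: eval_nat_numeral ac_simps)
lemma s10: "sum f {1..10::nat} = f 1 + f 2 + f 3 + f 4 + f 5 + f 6 + f 7 + f 8 + f 9 + (f 10 :: 'a::comm_monoid_add)"
  by (simp add: eval_nat_numeral ac_simps)

lemma pick2:
  fixes ua ub va vb :: complex and X Y :: "nat \<Rightarrow> complex"
  assumes "ua \<noteq> 0" "ub \<noteq> 0" "ua \<noteq> ub" "va \<noteq> 0" "vb \<noteq> 0" "va \<noteq> vb"
    and D: "\<forall>i\<in>I. (X i = 0 \<and> Y i = 0) \<or> (X i = ua \<and> Y i = va) \<or> (X i = ub \<and> Y i = vb)"
  shows "\<exists>p sv r. p \<noteq> 0 \<and> sv \<noteq> 0 \<and> (\<forall>i\<in>I. Y i * sv - X i * p - Y i * X i * r = 0)"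
proof (intro exI conjI ballI)
  define sv where "sv = 1/va - 1/vb"
  define p where "p = 1/ua - 1/ub"
  define r where "r = sv/ua - p/va"
  show "p \<noteq> 0" using assms unfolding p_def by (simp add: field_simps)
  show "sv \<noteq> 0" using assms unfolding sv_def by (simp add: field_simps)
  have e1: "va * sv - ua * p - va * ua * r = 0" using assms unfolding r_def by (simp add: field_simps)
  have e2: "vb * sv - ub * p - vb * ub * r = 0" using assms unfolding r_def p_def sv_def
    by (simp add: field_simps)
  fix i assume "i \<in> I"
  then show "Y i * sv - X i * p - Y i * X i * r = 0" using D e1 e2 by auto
qed


lemma case1:
  fixes x y :: "nat \<Rightarrow> complex"
  assumes sx: "x 1 + x 2 + x 3 + x 4 + x 5 + x 6 + x 7 + x 8 + x 9 + x 10 = 0" and zx: "(x 1 + x 2) = 0" and n1x: "(x 3 + x 4) \<noteq> 0" and n2x: "(x 5 + x 6) \<noteq> 0" and n3x: "(x 7 + x 8) \<noteq> 0" and n4x: "(x 9 + x 10) \<noteq> 0" and dx: "(x 3 + x 4) + (x 5 + x 6) \<noteq> 0" and ex: "(x 5 + x 6) + (x 7 + x 8) = 0" and sy: "y 1 + y 2 + y 3 + y 4 + y 5 + y 6 + y 7 + y 8 + y 9 + y 10 = 0" and zy: "(y 1 + y 2) = 0" and n1y: "(y 3 + y 4) \<noteq> 0" and n2y: "(y 5 + y 6) \<noteq> 0" and n3y: "(y 7 + y 8) \<noteq> 0" and n4y: "(y 9 + y 10) \<noteq> 0" and dy: "(y 3 + y 4) + (y 5 + y 6) \<noteq> 0"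 and ey: "(y 5 + y 6) + (y 7 + y 8) = 0"
  shows "\<exists>p sv r. p \<noteq> 0 \<and> sv \<noteq> 0 \<and> (\<forall>i\<in>{2,4,6,8::nat}. sum y {1..i} * sv - sum x {1..i} * p - sum y {1..i} * sum x {1..i} * r = 0)"
proof (rule pick2[where ua="(x 3 + x 4)" and ub="(x 3 + x 4)+(x 5 + x 6)" and va="(y 3 + y 4)" and vb="(y 3 + y 4)+(y 5 + y 6)"])
  show "(x 3 + x 4) \<noteq> 0" using sx zx ex n1x by (blast | algebra)
  show "(x 3 + x 4)+(x 5 + x 6) \<noteq> 0" using sx zx ex dx by (blast | algebra)
  show "(x 3 + x 4) \<noteq> (x 3 + x 4)+(x 5 + x 6)" using sx zx ex n2x by algebra
  show "(y 3 + y 4) \<noteq> 0" using sy zy ey n1y by (blast | algebra)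
  show "(y 3 + y 4)+(y 5 + y 6) \<noteq> 0" using sy zy ey dy by (blast | algebra)
  show "(y 3 + y 4) \<noteq> (y 3 + y 4)+(y 5 + y 6)" using sy zy ey n2y by algebra
  have x2: "sum x {1..2::nat} = 0" unfolding s2 using sx zx ex by (algebra | simp)
  have y2: "sum y {1..2::nat} = 0" unfolding s2 using sy zy ey by (algebra | simp)
  have x4: "sum x {1..4::nat} = (x 3 + x 4)" unfolding s4 using sx zx ex by (algebra | simp)
  have y4: "sum y {1..4::nat} = (y 3 + y 4)" unfolding s4 using sy zy ey by (algebra | simp)
  have x6: "sum x {1..6::nat} = (x 3 + x 4)+(x 5 + x 6)" unfolding s6 using sx zx ex by (algebra | simp)
  have y6: "sum y {1..6::nat} = (y 3 + y 4)+(y 5 + y 6)" unfolding s6 using sy zy ey by (algebra | simp)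
  have x8: "sum x {1..8::nat} = (x 3 + x 4)" unfolding s8 using sx zx ex by (algebra | simp)
  have y8: "sum y {1..8::nat} = (y 3 + y 4)" unfolding s8 using sy zy ey by (algebra | simp)
  show "\<forall>i\<in>{2,4,6,8::nat}. (sum x {1..i} = 0 \<and> sum y {1..i} = 0) \<or> (sum x {1..i} = (x 3 + x 4) \<and> sum y {1..i} = (y 3 + y 4)) \<or> (sum x {1..i} = (x 3 + x 4)+(x 5 + x 6) \<and> sum y {1..i} = (y 3 + y 4)+(y 5 + y 6))"
    using x2 x4 x6 x8 y2 y4 y6 y8 by auto
qed

lemma case3:
  fixes x y :: "nat \<Rightarrow> complex"
  assumes sx: "x 1 + x 2 + x 3 + x 4 + x 5 + x 6 + x 7 + x 8 + x 9 + x 10 = 0" and zx: "(x 3 + x 4) = 0" and n1x: "(x 5 + x 6) \<noteq> 0" and n2x: "(x 7 + x 8) \<noteq> 0" and n3x: "(x 9 + x 10) \<noteq> 0" and n4x: "(x 1 + x 2) \<noteq> 0" and dx: "(x 5 + x 6) + (x 7 + x 8) \<noteq> 0" and ex: "(x 7 + x 8) + (x 9 + x 10) = 0" and sy: "y 1 + y 2 + y 3 + y 4 + y 5 + y 6 + y 7 + y 8 + y 9 + y 10 = 0" and zy: "(y 3 + y 4) = 0" and n1y: "(y 5 + y 6) \<noteq> 0" and n2y: "(y 7 + y 8) \<noteq> 0" and n3y: "(y 9 + y 10) \<noteq> 0" and n4y: "(y 1 + y 2) \<noteq> 0" and dy: "(y 5 + y 6) + (y 7 + y 8) \<noteq> 0"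 and ey: "(y 7 + y 8) + (y 9 + y 10) = 0"
  shows "\<exists>p sv r. p \<noteq> 0 \<and> sv \<noteq> 0 \<and> (\<forall>i\<in>{2,4,6,8::nat}. sum y {1..i} * sv - sum x {1..i} * p - sum y {1..i} * sum x {1..i} * r = 0)"
proof (rule pick2[where ua="(x 1 + x 2)" and ub="(x 7 + x 8)" and va="(y 1 + y 2)" and vb="(y 7 + y 8)"])
  show "(x 1 + x 2) \<noteq> 0" using sx zx ex n4x by (blast | algebra)
  show "(x 7 + x 8) \<noteq> 0" using sx zx ex n2x by (blast | algebra)
  show "(x 1 + x 2) \<noteq> (x 7 + x 8)" using sx zx ex dx by algebra
  show "(y 1 + y 2) \<noteq> 0" using sy zy ey n4y by (blast | algebra)
  show "(y 7 + y 8) \<noteq> 0" using sy zy ey n2y by (blast | algebra)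
  show "(y 1 + y 2) \<noteq> (y 7 + y 8)" using sy zy ey dy by algebra
  have x2: "sum x {1..2::nat} = (x 1 + x 2)" unfolding s2 using sx zx ex by (algebra | simp)
  have y2: "sum y {1..2::nat} = (y 1 + y 2)" unfolding s2 using sy zy ey by (algebra | simp)
  have x4: "sum x {1..4::nat} = (x 1 + x 2)" unfolding s4 using sx zx ex by (algebra | simp)
  have y4: "sum y {1..4::nat} = (y 1 + y 2)" unfolding s4 using sy zy ey by (algebra | simp)
  have x6: "sum x {1..6::nat} = 0" unfolding s6 using sx zx ex by (algebra | simp)
  have y6: "sum y {1..6::nat} = 0" unfolding s6 using sy zy ey by (algebra | simp)
  have x8: "sum x {1..8::nat} = (x 7 + x 8)" unfolding s8 using sx zx ex by (algebra | simp)
  have y8: "sum y {1..8::nat} = (y 7 + y 8)" unfolding s8 using sy zy ey by (algebra | simp)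
  show "\<forall>i\<in>{2,4,6,8::nat}. (sum x {1..i} = 0 \<and> sum y {1..i} = 0) \<or> (sum x {1..i} = (x 1 + x 2) \<and> sum y {1..i} = (y 1 + y 2)) \<or> (sum x {1..i} = (x 7 + x 8) \<and> sum y {1..i} = (y 7 + y 8))"
    using x2 x4 x6 x8 y2 y4 y6 y8 by auto
qed

lemma case5:
  fixes x y :: "nat \<Rightarrow> complex"
  assumes sx: "x 1 + x 2 + x 3 + x 4 + x 5 + x 6 + x 7 + x 8 + x 9 + x 10 = 0" and zx: "(x 5 + x 6) = 0" and n1x: "(x 7 + x 8) \<noteq> 0" and n2x: "(x 9 + x 10) \<noteq> 0" and n3x: "(x 1 + x 2) \<noteq> 0" and n4x: "(x 3 + x 4) \<noteq> 0" and dx: "(x 7 + x 8) + (x 9 + x 10) \<noteq> 0" and ex: "(x 9 + x 10) + (x 1 + x 2) = 0" and sy: "y 1 + y 2 + y 3 + y 4 + y 5 + y 6 + y 7 + y 8 + y 9 + y 10 = 0" and zy: "(y 5 + y 6) = 0" and n1y: "(y 7 + y 8) \<noteq> 0" and n2y: "(y 9 + y 10) \<noteq> 0" and n3y: "(y 1 + y 2) \<noteq> 0" and n4y: "(y 3 + y 4) \<noteq> 0" and dy: "(y 7 + y 8) + (y 9 + y 10) \<noteq> 0" and ey: "(y 9 + y 10) + (y 1 + y 2) = 0"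
  shows "\<exists>p sv r. p \<noteq> 0 \<and> sv \<noteq> 0 \<and> (\<forall>i\<in>{2,4,6,8::nat}. sum y {1..i} * sv - sum x {1..i} * p - sum y {1..i} * sum x {1..i} * r = 0)"
proof (rule pick2[where ua="(x 1 + x 2)" and ub="(x 1 + x 2)+(x 3 + x 4)" and va="(y 1 + y 2)" and vb="(y 1 + y 2)+(y 3 + y 4)"])
  show "(x 1 + x 2) \<noteq> 0" using sx zx ex n3x by (blast | algebra)
  show "(x 1 + x 2)+(x 3 + x 4) \<noteq> 0" using sx zx ex dx by (blast | algebra)
  show "(x 1 + x 2) \<noteq> (x 1 + x 2)+(x 3 + x 4)" using sx zx ex n4x by algebra
  show "(y 1 + y 2) \<noteq> 0" using sy zy ey n3y by (blast | algebra)
  show "(y 1 + y 2)+(y 3 + y 4) \<noteq> 0" using sy zy ey dy by (blast | algebra)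
  show "(y 1 + y 2) \<noteq> (y 1 + y 2)+(y 3 + y 4)" using sy zy ey n4y by algebra
  have x2: "sum x {1..2::nat} = (x 1 + x 2)" unfolding s2 using sx zx ex by (algebra | simp)
  have y2: "sum y {1..2::nat} = (y 1 + y 2)" unfolding s2 using sy zy ey by (algebra | simp)
  have x4: "sum x {1..4::nat} = (x 1 + x 2)+(x 3 + x 4)" unfolding s4 using sx zx ex by (algebra | simp)
  have y4: "sum y {1..4::nat} = (y 1 + y 2)+(y 3 + y 4)" unfolding s4 using sy zy ey by (algebra | simp)
  have x6: "sum x {1..6::nat} = (x 1 + x 2)+(x 3 + x 4)" unfolding s6 using sx zx ex by (algebra | simp)
  have y6: "sum y {1..6::nat} = (y 1 + y 2)+(y 3 + y 4)" unfolding s6 using sy zy ey by (algebra | simp)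
  have x8: "sum x {1..8::nat} = (x 1 + x 2)" unfolding s8 using sx zx ex by (algebra | simp)
  have y8: "sum y {1..8::nat} = (y 1 + y 2)" unfolding s8 using sy zy ey by (algebra | simp)
  show "\<forall>i\<in>{2,4,6,8::nat}. (sum x {1..i} = 0 \<and> sum y {1..i} = 0) \<or> (sum x {1..i} = (x 1 + x 2) \<and> sum y {1..i} = (y 1 + y 2)) \<or> (sum x {1..i} = (x 1 + x 2)+(x 3 + x 4) \<and> sum y {1..i} = (y 1 + y 2)+(y 3 + y 4))"
    using x2 x4 x6 x8 y2 y4 y6 y8 by auto
qed

lemma case7:
  fixes x y :: "nat \<Rightarrow> complex"
  assumes sx: "x 1 + x 2 + x 3 + x 4 + x 5 + x 6 + x 7 + x 8 + x 9 + x 10 = 0" and zx: "(x 7 + x 8) = 0" and n1x: "(x 9 + x 10) \<noteq> 0" and n2x: "(x 1 + x 2) \<noteq> 0" and n3x: "(x 3 + x 4) \<noteq> 0" and n4x: "(x 5 + x 6) \<noteq> 0" and dx: "(x 9 + x 10) + (x 1 + x 2) \<noteq> 0" and ex: "(x 1 + x 2) + (x 3 + x 4) = 0" and sy: "y 1 + y 2 + y 3 + y 4 + y 5 + y 6 + y 7 + y 8 + y 9 + y 10 = 0" and zy: "(y 7 + y 8) = 0" and n1y: "(y 9 + y 10) \<noteq> 0" and n2y: "(y 1 + y 2) \<noteq> 0" and n3y: "(y 3 + y 4) \<noteq> 0" and n4y: "(y 5 + y 6) \<noteq> 0" and dy: "(y 9 + y 10) + (y 1 + y 2) \<noteq> 0"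 and ey: "(y 1 + y 2) + (y 3 + y 4) = 0"
  shows "\<exists>p sv r. p \<noteq> 0 \<and> sv \<noteq> 0 \<and> (\<forall>i\<in>{2,4,6,8::nat}. sum y {1..i} * sv - sum x {1..i} * p - sum y {1..i} * sum x {1..i} * r = 0)"
proof (rule pick2[where ua="(x 1 + x 2)" and ub="(x 5 + x 6)" and va="(y 1 + y 2)" and vb="(y 5 + y 6)"])
  show "(x 1 + x 2) \<noteq> 0" using sx zx ex n2x by (blast | algebra)
  show "(x 5 + x 6) \<noteq> 0" using sx zx ex n4x by (blast | algebra)
  show "(x 1 + x 2) \<noteq> (x 5 + x 6)" using sx zx ex dx by algebra
  show "(y 1 + y 2) \<noteq> 0" using sy zy ey n2y by (blast | algebra)
  show "(y 5 + y 6) \<noteq> 0" using sy zy ey n4y by (blast | algebra)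
  show "(y 1 + y 2) \<noteq> (y 5 + y 6)" using sy zy ey dy by algebra
  have x2: "sum x {1..2::nat} = (x 1 + x 2)" unfolding s2 using sx zx ex by (algebra | simp)
  have y2: "sum y {1..2::nat} = (y 1 + y 2)" unfolding s2 using sy zy ey by (algebra | simp)
  have x4: "sum x {1..4::nat} = 0" unfolding s4 using sx zx ex by (algebra | simp)
  have y4: "sum y {1..4::nat} = 0" unfolding s4 using sy zy ey by (algebra | simp)
  have x6: "sum x {1..6::nat} = (x 5 + x 6)" unfolding s6 using sx zx ex by (algebra | simp)
  have y6: "sum y {1..6::nat} = (y 5 + y 6)" unfolding s6 using sy zy ey by (algebra | simp)
  have x8: "sum x {1..8::nat} = (x 5 + x 6)" unfolding s8 using sx zx ex by (algebra | simp)
  have y8: "sum y {1..8::nat} = (y 5 + y 6)" unfolding s8 using sy zy ey by (algebra | simp)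
  show "\<forall>i\<in>{2,4,6,8::nat}. (sum x {1..i} = 0 \<and> sum y {1..i} = 0) \<or> (sum x {1..i} = (x 1 + x 2) \<and> sum y {1..i} = (y 1 + y 2)) \<or> (sum x {1..i} = (x 5 + x 6) \<and> sum y {1..i} = (y 5 + y 6))"
    using x2 x4 x6 x8 y2 y4 y6 y8 by auto
qed

lemma case9:
  fixes x y :: "nat \<Rightarrow> complex"
  assumes sx: "x 1 + x 2 + x 3 + x 4 + x 5 + x 6 + x 7 + x 8 + x 9 + x 10 = 0" and zx: "(x 9 + x 10) = 0" and n1x: "(x 1 + x 2) \<noteq> 0" and n2x: "(x 3 + x 4) \<noteq> 0" and n3x: "(x 5 + x 6) \<noteq> 0" and n4x: "(x 7 + x 8) \<noteq> 0" and dx: "(x 1 + x 2) + (x 3 + x 4) \<noteq> 0" and ex: "(x 3 + x 4) + (x 5 + x 6) = 0" and sy: "y 1 + y 2 + y 3 + y 4 + y 5 + y 6 + y 7 + y 8 + y 9 + y 10 = 0" and zy: "(y 9 + y 10) = 0" and n1y: "(y 1 + y 2) \<noteq> 0" and n2y: "(y 3 + y 4) \<noteq> 0" and n3y: "(y 5 + y 6) \<noteq> 0" and n4y: "(y 7 + y 8) \<noteq> 0" and dy: "(y 1 + y 2) + (y 3 + y 4) \<noteq> 0" and ey: "(y 3 + y 4) + (y 5 + y 6) = 0"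
  shows "\<exists>p sv r. p \<noteq> 0 \<and> sv \<noteq> 0 \<and> (\<forall>i\<in>{2,4,6,8::nat}. sum y {1..i} * sv - sum x {1..i} * p - sum y {1..i} * sum x {1..i} * r = 0)"
proof (rule pick2[where ua="(x 1 + x 2)" and ub="(x 1 + x 2)+(x 3 + x 4)" and va="(y 1 + y 2)" and vb="(y 1 + y 2)+(y 3 + y 4)"])
  show "(x 1 + x 2) \<noteq> 0" using sx zx ex n1x by (blast | algebra)
  show "(x 1 + x 2)+(x 3 + x 4) \<noteq> 0" using sx zx ex dx by (blast | algebra)
  show "(x 1 + x 2) \<noteq> (x 1 + x 2)+(x 3 + x 4)" using sx zx ex n2x by algebra
  show "(y 1 + y 2) \<noteq> 0" using sy zy ey n1y by (blast | algebra)
  show "(y 1 + y 2)+(y 3 + y 4) \<noteq> 0" using sy zy ey dy by (blast | algebra)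
  show "(y 1 + y 2) \<noteq> (y 1 + y 2)+(y 3 + y 4)" using sy zy ey n2y by algebra
  have x2: "sum x {1..2::nat} = (x 1 + x 2)" unfolding s2 using sx zx ex by (algebra | simp)
  have y2: "sum y {1..2::nat} = (y 1 + y 2)" unfolding s2 using sy zy ey by (algebra | simp)
  have x4: "sum x {1..4::nat} = (x 1 + x 2)+(x 3 + x 4)" unfolding s4 using sx zx ex by (algebra | simp)
  have y4: "sum y {1..4::nat} = (y 1 + y 2)+(y 3 + y 4)" unfolding s4 using sy zy ey by (algebra | simp)
  have x6: "sum x {1..6::nat} = (x 1 + x 2)" unfolding s6 using sx zx ex by (algebra | simp)
  have y6: "sum y {1..6::nat} = (y 1 + y 2)" unfolding s6 using sy zy ey by (algebra | simp)
  have x8: "sum x {1..8::nat} = 0" unfolding s8 using sx zx ex by (algebra | simp)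
  have y8: "sum y {1..8::nat} = 0" unfolding s8 using sy zy ey by (algebra | simp)
  show "\<forall>i\<in>{2,4,6,8::nat}. (sum x {1..i} = 0 \<and> sum y {1..i} = 0) \<or> (sum x {1..i} = (x 1 + x 2) \<and> sum y {1..i} = (y 1 + y 2)) \<or> (sum x {1..i} = (x 1 + x 2)+(x 3 + x 4) \<and> sum y {1..i} = (y 1 + y 2)+(y 3 + y 4))"
    using x2 x4 x6 x8 y2 y4 y6 y8 by auto
qed

theorem theorem2p4:
  fixes b c :: "nat \<Rightarrow> complex fps" and j :: nat
  assumes "(\<Sum>i=1..10. b i) = 0" and "(\<Sum>i=1..10. c i) = 0"
    and "j \<in> {1, 3, 5, 7, 9}"
    and "fps_X dvd Bsum b j" and "fps_X dvd Bsum c j"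
    and "\<forall>l\<in>{1..4}. \<not> fps_X dvd Bsum b (cyc j l)"
    and "\<forall>l\<in>{1..4}. \<not> fps_X dvd Bsum c (cyc j l)"
    and "\<not> fps_X dvd (Bsum b (cyc j 1) + Bsum b (cyc j 2))"
    and "fps_X dvd (Bsum b (cyc j 2) + Bsum b (cyc j 3))"
    and "\<not> fps_X dvd (Bsum c (cyc j 1) + Bsum c (cyc j 2))"
    and "fps_X dvd (Bsum c (cyc j 2) + Bsum c (cyc j 3))"
  shows "M_iso b c"
proof -
  define x where "x k = fps_nth (b k) 0" for k
  define y where "y k = fps_nth (c k) 0" for k
  have Bx: "\<And>k. fps_X dvd Bsum b k \<longleftrightarrow> x k + x (k mod 10 + 1) = 0"
    by (simp add: X_dvd_iff Bsum_def x_def)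
  have Bx2: "\<And>k l. fps_X dvd (Bsum b k + Bsum b l) \<longleftrightarrow> x k + x (k mod 10 + 1) + (x l + x (l mod 10 + 1)) = 0"
    by (simp add: X_dvd_iff Bsum_def x_def)
  have By: "\<And>k. fps_X dvd Bsum c k \<longleftrightarrow> y k + y (k mod 10 + 1) = 0"
    by (simp add: X_dvd_iff Bsum_def y_def)
  have By2: "\<And>k l. fps_X dvd (Bsum c k + Bsum c l) \<longleftrightarrow> y k + y (k mod 10 + 1) + (y l + y (l mod 10 + 1)) = 0"
    by (simp add: X_dvd_iff Bsum_def y_def)
  have xs: "x 1 + x 2 + x 3 + x 4 + x 5 + x 6 + x 7 + x 8 + x 9 + x 10 = 0"
  proof -
    have "fps_nth (\<Sum>i=1..10. b i) 0 = 0" using assms(1) by simp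
    then have "sum x {1..10} = 0" unfolding fps_sum_nth x_def .
    then show ?thesis unfolding s10 .
  qed
  have ys: "y 1 + y 2 + y 3 + y 4 + y 5 + y 6 + y 7 + y 8 + y 9 + y 10 = 0"
  proof -
    have "fps_nth (\<Sum>i=1..10. c i) 0 = 0" using assms(2) by simp
    then have "sum y {1..10} = 0" unfolding fps_sum_nth y_def .
    then show ?thesis unfolding s10 .
  qed
  have hx0: "x j + x (j mod 10 + 1) = 0" using assms(4) Bx by simp
  have hy0: "y j + y (j mod 10 + 1) = 0" using assms(5) By by simp
  have nx: "\<And>l. l \<in> {1..4} \<Longrightarrow> x (cyc j l) + x (cyc j l mod 10 + 1) \<noteq> 0" using assms(6) Bx by auto
  have ny: "\<And>l. l \<in> {1..4} \<Longrightarrow> y (cyc j l) + y (cyc j l mod 10 + 1) \<noteq> 0" using assms(7) By by auto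
  have hx1: "x (cyc j 1) + x (cyc j 1 mod 10 + 1) + (x (cyc j 2) + x (cyc j 2 mod 10 + 1)) \<noteq> 0"
    using assms(8) Bx2 by simp
  have hx2: "x (cyc j 2) + x (cyc j 2 mod 10 + 1) + (x (cyc j 3) + x (cyc j 3 mod 10 + 1)) = 0"
    using assms(9) Bx2 by simp
  have hy1: "y (cyc j 1) + y (cyc j 1 mod 10 + 1) + (y (cyc j 2) + y (cyc j 2 mod 10 + 1)) \<noteq> 0"
    using assms(10) By2 by simp
  have hy2: "y (cyc j 2) + y (cyc j 2 mod 10 + 1) + (y (cyc j 3) + y (cyc j 3 mod 10 + 1)) = 0"
    using assms(11) By2 by simp
  have nx1: "x (cyc j 1) + x (cyc j 1 mod 10 + 1) \<noteq> 0" by (rule nx) simp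
  have nx2: "x (cyc j 2) + x (cyc j 2 mod 10 + 1) \<noteq> 0" by (rule nx) simp
  have nx3: "x (cyc j 3) + x (cyc j 3 mod 10 + 1) \<noteq> 0" by (rule nx) simp
  have nx4: "x (cyc j 4) + x (cyc j 4 mod 10 + 1) \<noteq> 0" by (rule nx) simp
  have ny1: "y (cyc j 1) + y (cyc j 1 mod 10 + 1) \<noteq> 0" by (rule ny) simp
  have ny2: "y (cyc j 2) + y (cyc j 2 mod 10 + 1) \<noteq> 0" by (rule ny) simp
  have ny3: "y (cyc j 3) + y (cyc j 3 mod 10 + 1) \<noteq> 0" by (rule ny) simp
  have ny4: "y (cyc j 4) + y (cyc j 4 mod 10 + 1) \<noteq> 0" by (rule ny) simp
  have cy: "cyc 1 1 = 3" "cyc 1 2 = 5" "cyc 1 3 = 7" "cyc 1 4 = 9" "cyc 3 1 = 5" "cyc 3 2 = 7" "cyc 3 3 = 9" "cyc 3 4 = 1" "cyc 5 1 = 7" "cyc 5 2 = 9" "cyc 5 3 = 1" "cyc 5 4 = 3" "cyc 7 1 = 9" "cyc 7 2 = 1" "cyc 7 3 = 3" "cyc 7 4 = 5" "cyc 9 1 = 1" "cyc 9 2 = 3" "cyc 9 3 = 5" "cyc 9 4 = 7" by (simp_all add: cyc_def)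
  have md: "(1::nat) mod 10 + 1 = 2" "(3::nat) mod 10 + 1 = 4" "(5::nat) mod 10 + 1 = 6" "(7::nat) mod 10 + 1 = 8" "(9::nat) mod 10 + 1 = 10" by simp_all
  note G = xs hx0 nx1 nx2 nx3 nx4 hx1 hx2 ys hy0 ny1 ny2 ny3 ny4 hy1 hy2
  have EX: "\<exists>p sv r. p \<noteq> 0 \<and> sv \<noteq> 0 \<and> (\<forall>i\<in>{2,4,6,8::nat}. sum y {1..i} * sv - sum x {1..i} * p - sum y {1..i} * sum x {1..i} * r = 0)"
    using assms(3)
  proof (elim insertE emptyE)
    assume jJ: "j = 1" show ?thesis using G unfolding jJ cy md by (rule case1)
  next
    assume jJ: "j = 3" show ?thesis using G unfolding jJ cy md by (rule case3)
  next
    assume jJ: "j = 5" show ?thesis using G unfolding jJ cy md by (rule case5)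
  next
    assume jJ: "j = 7" show ?thesis using G unfolding jJ cy md by (rule case7)
  next
    assume jJ: "j = 9" show ?thesis using G unfolding jJ cy md by (rule case9)
  qed
  then obtain p sv r where p: "p \<noteq> 0" "sv \<noteq> 0"
    and e: "\<forall>i\<in>{2,4,6,8::nat}. sum y {1..i} * sv - sum x {1..i} * p - sum y {1..i} * sum x {1..i} * r = 0"
    by blast
  show ?thesis
  proof (rule crit[OF assms(1,2) p])
    fix i :: nat assume "i \<in> {2,4,6,8}"
    then have "sum y {1..i} * sv - sum x {1..i} * p - sum y {1..i} * sum x {1..i} * r = 0"
      using e by blast
    moreover have "fps_nth (Ev b c p sv r i) 0 = sum y {1..i} * sv - sum x {1..i} * p - sum y {1..i} * sum x {1..i} * r"
      unfolding Ev_def x_def y_def by (simp add: fps_sum_nth)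
    ultimately show "fps_nth (Ev b c p sv r i) 0 = 0" by simp
  qed
qed
end
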